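(* Let $X$ and $Y$ be cellular spaces, $X$ compact, $r\ge0$, and $a,b\colon X\to Y$ maps. If $a$ is firmly $r$-similar to $b$, then $a\overset{r}{\approx}b$.
   Context: Cellular space = based CW complex; maps based unless called unbased. $\langle W\rangle$ = free abelian group on a set $W$. $Y^X$ = based maps (compact-open); $Y^X_a$ = path component of $a$, regarded as based at $a$; $V\mapsto V|_R$ restriction; $\mathcal F_n(X)$ = finite $R\subseteq X$ containing the basepoint with $|R|\le n+1$; $\langle Y^X\rangle^{(s)}=\{V:V|_R=0\ \forall R\in\mathcal F_{s-1}(X)\}$. For unbased $U,V$: $V^{(U)}$ = unbased maps; $\Xi^U(v)$ = constant map at $v$; for $U=\coprod_iU_i$, $\boxed{\sqcup}_i\langle w_i\rangle=\langle w\rangle$, $w|_{U_i}=w_i$, multilinearly. For nonempty finite $E$: simplex $\Delta E$, faces $\Delta F$; layouts = sets $A$ of pairwise disjoint nonempty subsets; $\Delta[A]=\coprod_{F\in A}\Delta F$; $S\in\langle V^{(\Delta E)}\rangle$ fissile if $S|_{\Delta[A]}=\boxed{\sqcup}_{F\in A}S|_{\Delta F}$ for all layouts. $U\wr X=(U\times X)/(U\times\{x_0\})$, $\#^X(w)(u\wr x)=w(u)(x)$, $\langle (Y^X)^{(U)}\rangle^{(s)}_X=\langle\#^X\rangle^{-1}\langle Y^{U\wr X}\rangle^{(s)}$. $a\overset{r}{\approx}b$ iff for each nonempty finite $E$ there is a fissile $S\in\langle (Y^X_a)^{(\Delta E)}\rangle$ with $\langle\Xi^{\Delta E}(b)\rangle-S\in\langle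 (Y^X)^{(\Delta E)}\rangle^{(r+1)}_X$. Cone $\check CU=(U\times[0,1])/(U\times\{0\})$ based at the apex, $U=U\times\{1\}\subseteq\check CU$; $\check C\Delta[A]=\bigvee_{F\in A}\check C\Delta F\subseteq\check C\Delta E$. $\langle (Y^X_a)^T\rangle$: generated by based maps $T\to(Y^X_a,a)$. Combining product of based maps $\boxed{\vee}_F\langle v_F\rangle=\langle\bar\bigvee_Fv_F\rangle$. $R\in\langle (Y^X_a)^{\check C\Delta E}\rangle$ is fissile if $R|_{\check C\Delta[A]}=\boxed{\vee}_{F\in A}R|_{\check C\Delta F}$ for all layouts $A$. $a$ is firmly $r$-similar to $b$ if for every nonempty finite $E$ there is a fissile $R\in\langle (Y^X_a)^{\check C\Delta E}\rangle$ with $\langle\Xi^{\Delta E}(b)\rangle-R|_{\Delta E}\in\langle (Y^X)^{(\Delta E)}\rangle^{(r+1)}_X$ ($R|_{\Delta E}$ is restriction to the base $\Delta E\subseteq\check C\Delta E$, as unbased maps). *)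

theory Defs
  imports "HOL-Analysis.Analysis"
begin

definition disc :: "nat \<Rightarrow> (nat \<Rightarrow> real) set" where
  "disc n = {x. (\<forall>i\<ge>n. x i = 0) \<and> (\<Sum>i<n. (x i)^2) \<le> 1}"

definition disc_bd :: "nat \<Rightarrow> (nat \<Rightarrow> real) set" where
  "disc_bd n = {x. (\<forall>i\<ge>n. x i = 0) \<and> (\<Sum>i<n. (x i)^2) = 1}"

definition cellular_space :: "'a topology \<Rightarrow> 'a \<Rightarrow> bool" where
  "cellular_space X x0 \<longleftrightarrow> Hausdorff_space X \<and> x0 \<in> topspace X \<and>
    (\<exists>(cells :: 'a set set) (dim :: 'a set \<Rightarrow> nat) (\<Phi> :: 'a set \<Rightarrow> (nat \<Rightarrow> real) \<Rightarrow> 'a).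
       pairwise disjnt cells \<and> \<Union>cells = topspace X \<and> {} \<notin> cells \<and> {x0} \<in> cells \<and>
       (\<forall>e\<in>cells.
          continuous_map (subtopology (powertop_real UNIV) (disc (dim e))) X (\<Phi> e) \<and>
          homeomorphic_map (subtopology (powertop_real UNIV) (disc (dim e) - disc_bd (dim e)))
                           (subtopology X e) (\<Phi> e) \<and>
          (\<exists>C\<subseteq>cells. finite C \<and> (\<forall>e'\<in>C. dim e' < dim e) \<and> \<Phi> e ` disc_bd (dim e) \<subseteq> \<Union>C)) \<and>
       (\<forall>Z\<subseteq>topspace X. closedin X Z \<longleftrightarrow> (\<forall>e\<in>cells. closedin X (Z \<inter> \<Phi> e ` disc (dim e)))))"

definition free_ab :: "'w set \<Rightarrow> ('w \<Rightarrow> int) set" where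
  "free_ab W = {c. finite {w. c w \<noteq> 0} \<and> {w. c w \<noteq> 0} \<subseteq> W}"

definition gen :: "'w \<Rightarrow> 'w \<Rightarrow> int" where
  "gen w = (\<lambda>v. if v = w then 1 else 0)"

definition push :: "('v \<Rightarrow> 'w) \<Rightarrow> ('v \<Rightarrow> int) \<Rightarrow> 'w \<Rightarrow> int" where
  "push g c = (\<lambda>w. \<Sum>v\<in>{v. c v \<noteq> 0 \<and> g v = w}. c v)"

text \<open>Multilinear combining product: the generator on the union D whose restrictions to
  the pieces Z i (i in A) are the generators w i; P g is the based-ness requirement.\<close>
definition glue :: "'p set \<Rightarrow> (('p \<Rightarrow> 'v) \<Rightarrow> bool) \<Rightarrow> 'i set \<Rightarrow> ('i \<Rightarrow> 'p set)
                     \<Rightarrow> ('i \<Rightarrow> ('p \<Rightarrow> 'v) \<Rightarrow> int) \<Rightarrow> ('p \<Rightarrow> 'v) \<Rightarrow> int" where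
  "glue D P A Z S = (\<lambda>g. if g \<in> extensional D \<and> P g then (\<Prod>i\<in>A. S i (restrict g (Z i))) else 0)"

definition based_maps :: "'x topology \<Rightarrow> 'x \<Rightarrow> 'y topology \<Rightarrow> 'y \<Rightarrow> ('x \<Rightarrow> 'y) set" where
  "based_maps X x0 Y y0 = {f. continuous_map X Y f \<and> f x0 = y0 \<and> f \<in> extensional (topspace X)}"

definition map_space :: "'x topology \<Rightarrow> 'x \<Rightarrow> 'y topology \<Rightarrow> 'y \<Rightarrow> ('x \<Rightarrow> 'y) topology" where
  "map_space X x0 Y y0 = subtopology
     (topology_generated_by {{f. f ` K \<subseteq> U} | K U. compactin X K \<and> openin Y U})
     (based_maps X x0 Y y0)"

definition map_comp :: "'x topology \<Rightarrow> 'x \<Rightarrow> 'y topology \<Rightarrow> 'y \<Rightarrow> ('x \<Rightarrow> 'y) \<Rightarrow> ('x \<Rightarrow> 'y) topology" where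
  "map_comp X x0 Y y0 a = subtopology (map_space X x0 Y y0)
                               (path_component_of_set (map_space X x0 Y y0) a)"

definition fsimplex :: "nat set \<Rightarrow> (nat \<Rightarrow> real) set" where
  "fsimplex E = {x. (\<forall>i. 0 \<le> x i) \<and> (\<forall>i. i \<notin> E \<longrightarrow> x i = 0) \<and> sum x E = 1}"

definition simplex_top :: "nat set \<Rightarrow> (nat \<Rightarrow> real) topology" where
  "simplex_top E = subtopology (powertop_real UNIV) (fsimplex E)"

definition layout :: "nat set \<Rightarrow> nat set set \<Rightarrow> bool" where
  "layout E A \<longleftrightarrow> A \<subseteq> Pow E \<and> {} \<notin> A \<and> pairwise disjnt A"

definition unbased_maps :: "(nat \<Rightarrow> real) topology \<Rightarrow> 'v topology \<Rightarrow> ((nat \<Rightarrow> real) \<Rightarrow> 'v) set" where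
  "unbased_maps T V = {f. continuous_map T V f \<and> f \<in> extensional (topspace T)}"

definition quot_top :: "'a topology \<Rightarrow> ('a \<Rightarrow> 'b) \<Rightarrow> 'b topology" where
  "quot_top T q = topology (\<lambda>U. U \<subseteq> q ` topspace T \<and> openin T {x \<in> topspace T. q x \<in> U})"

text \<open>Cone: (U x [0,1]) / (U x {0}); apex None, (u,t) with t>0 is Some (u,t).\<close>
definition cone_pt :: "(nat \<Rightarrow> real) \<times> real \<Rightarrow> ((nat \<Rightarrow> real) \<times> real) option" where
  "cone_pt = (\<lambda>(u,t). if t = 0 then None else Some (u,t))"

definition cone_set :: "(nat \<Rightarrow> real) set \<Rightarrow> ((nat \<Rightarrow> real) \<times> real) option set" where
  "cone_set S = cone_pt ` (S \<times> {0..1})"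

definition cone_top :: "nat set \<Rightarrow> ((nat \<Rightarrow> real) \<times> real) option topology" where
  "cone_top E = quot_top (prod_topology (simplex_top E) (top_of_set {0..1})) cone_pt"

text \<open>The wedge of cones over the faces in A, as a subset of the cone on Delta E.\<close>
definition wedge_set :: "nat set set \<Rightarrow> ((nat \<Rightarrow> real) \<times> real) option set" where
  "wedge_set A = {None} \<union> (\<Union>F\<in>A. cone_set (fsimplex F))"

text \<open>U wr X modelled as None (basepoint) and Some (u,x) with x not the basepoint.\<close>
definition wr_set :: "'u set \<Rightarrow> 'x set \<Rightarrow> 'x \<Rightarrow> ('u \<times> 'x) option set" where
  "wr_set U Xs x0 = {None} \<union> Some ` (U \<times> (Xs - {x0}))"

definition sharp :: "'y \<Rightarrow> ('u \<Rightarrow> 'x \<Rightarrow> 'y) \<Rightarrow> ('u \<times> 'x) option \<Rightarrow> 'y" where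
  "sharp y0 w = (\<lambda>z. case z of None \<Rightarrow> y0 | Some (u,x) \<Rightarrow> w u x)"

text \<open>V vanishes on all R in F_(s-1)(Z), i.e. finite R with basepoint and |R| <= s.\<close>
definition filt :: "'z set \<Rightarrow> 'z \<Rightarrow> nat \<Rightarrow> (('z \<Rightarrow> 'y) \<Rightarrow> int) \<Rightarrow> bool" where
  "filt Z z0 s V \<longleftrightarrow> (\<forall>R. finite R \<and> z0 \<in> R \<and> R \<subseteq> Z \<and> card R \<le> s \<longrightarrow> push (\<lambda>f. restrict f R) V = (\<lambda>_. 0))"

definition filt_X :: "nat set \<Rightarrow> 'x topology \<Rightarrow> 'x \<Rightarrow> 'y topology \<Rightarrow> 'y \<Rightarrow> nat
                       \<Rightarrow> (((nat \<Rightarrow> real) \<Rightarrow> 'x \<Rightarrow> 'y) \<Rightarrow> int) set" where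
  "filt_X E X x0 Y y0 s = {S \<in> free_ab (unbased_maps (simplex_top E) (map_space X x0 Y y0)).
      filt (wr_set (fsimplex E) (topspace X) x0) None s (push (sharp y0) S)}"

definition fissile :: "nat set \<Rightarrow> (((nat \<Rightarrow> real) \<Rightarrow> 'v) \<Rightarrow> int) \<Rightarrow> bool" where
  "fissile E S \<longleftrightarrow> (\<forall>A. layout E A \<longrightarrow>
      push (\<lambda>f. restrict f (\<Union>F\<in>A. fsimplex F)) S =
      glue (\<Union>F\<in>A. fsimplex F) (\<lambda>_. True) A fsimplex
           (\<lambda>F. push (\<lambda>f. restrict f (fsimplex F)) S))"

definition cone_fissile :: "nat set \<Rightarrow> 'v \<Rightarrow> ((((nat \<Rightarrow> real) \<times> real) option \<Rightarrow> 'v) \<Rightarrow> int) \<Rightarrow> bool" where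
  "cone_fissile E a R \<longleftrightarrow> (\<forall>A. layout E A \<longrightarrow>
      push (\<lambda>g. restrict g (wedge_set A)) R =
      glue (wedge_set A) (\<lambda>g. g None = a) A (\<lambda>F. cone_set (fsimplex F))
           (\<lambda>F. push (\<lambda>g. restrict g (cone_set (fsimplex F))) R))"

definition r_approx :: "'x topology \<Rightarrow> 'x \<Rightarrow> 'y topology \<Rightarrow> 'y \<Rightarrow> nat \<Rightarrow> ('x \<Rightarrow> 'y) \<Rightarrow> ('x \<Rightarrow> 'y) \<Rightarrow> bool" where
  "r_approx X x0 Y y0 r a b \<longleftrightarrow>
    (\<forall>E::nat set. finite E \<and> E \<noteq> {} \<longrightarrow>
      (\<exists>S \<in> free_ab (unbased_maps (simplex_top E)
                      (map_comp X x0 Y y0 (restrict a (topspace X)))).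
         fissile E S \<and>
         (\<lambda>f. gen (restrict (\<lambda>_. restrict b (topspace X)) (fsimplex E)) f - S f) \<in> filt_X E X x0 Y y0 (r + 1)))"

definition firmly_similar :: "'x topology \<Rightarrow> 'x \<Rightarrow> 'y topology \<Rightarrow> 'y \<Rightarrow> nat \<Rightarrow> ('x \<Rightarrow> 'y) \<Rightarrow> ('x \<Rightarrow> 'y) \<Rightarrow> bool" where
  "firmly_similar X x0 Y y0 r a b \<longleftrightarrow>
    (\<forall>E::nat set. finite E \<and> E \<noteq> {} \<longrightarrow>
      (\<exists>R \<in> free_ab {g. continuous_map (cone_top E) (map_comp X x0 Y y0 (restrict a (topspace X))) g
                        \<and> g None = restrict a (topspace X) \<and> g \<in> extensional (cone_set (fsimplex E))}.
         cone_fissile E (restrict a (topspace X)) R \<and>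
         (\<lambda>f. gen (restrict (\<lambda>_. restrict b (topspace X)) (fsimplex E)) f
           - push (\<lambda>g. restrict (\<lambda>p. g (Some (p, 1))) (fsimplex E)) R f)
           \<in> filt_X E X x0 Y y0 (r + 1)))"

end

theory Submission imports Defs begin


lemma push_push:
  assumes fin: "finite {v. c v \<noteq> 0}"
  shows "push k (push h c) = push (k \<circ> h) c"
proof
  fix w
  define Sc where "Sc = {v. c v \<noteq> 0}"
  have pu: "push h c u = sum c {v\<in>Sc. h v = u}" for u
    unfolding push_def Sc_def by (rule sum.cong) auto
  have "push k (push h c) w = sum (push h c) {u. push h c u \<noteq> 0 \<and> k u = w}"
    unfolding push_def by simp
  also have "\<dots> = sum (push h c) {u \<in> h ` Sc. k u = w}"
  proof (rule sum.mono_neutral_left)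
    show "finite {u \<in> h ` Sc. k u = w}" using fin Sc_def by auto
    show "{u. push h c u \<noteq> 0 \<and> k u = w} \<subseteq> {u \<in> h ` Sc. k u = w}"
    proof
      fix u assume u: "u \<in> {u. push h c u \<noteq> 0 \<and> k u = w}"
      then have "push h c u \<noteq> 0" "k u = w" by auto
      then have "{v\<in>Sc. h v = u} \<noteq> {}" using pu by fastforce
      then show "u \<in> {u \<in> h ` Sc. k u = w}" using \<open>k u = w\<close> by blast
    qed
    show "\<forall>i\<in>{u \<in> h ` Sc. k u = w} - {u. push h c u \<noteq> 0 \<and> k u = w}. push h c i = 0" by auto
  qed
  also have "\<dots> = sum (\<lambda>u. sum c {v\<in>{v\<in>Sc. k (h v) = w}. h v = u}) (h ` {v\<in>Sc. k (h v) = w})"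
  proof (rule sum.cong)
    show "{u \<in> h ` Sc. k u = w} = h ` {v\<in>Sc. k (h v) = w}" by auto
    fix u assume "u \<in> h ` {v\<in>Sc. k (h v) = w}"
    then have "k u = w" by auto
    then have "{v\<in>{v\<in>Sc. k (h v) = w}. h v = u} = {v\<in>Sc. h v = u}" by auto
    then show "push h c u = sum c {v\<in>{v\<in>Sc. k (h v) = w}. h v = u}" using pu by simp
  qed
  also have "\<dots> = sum c {v\<in>Sc. k (h v) = w}"
    by (rule sum.image_gen[symmetric]) (use fin Sc_def in auto)
  also have "\<dots> = push (k \<circ> h) c w"
    unfolding push_def Sc_def by (rule sum.cong) auto
  finally show "push k (push h c) w = push (k \<circ> h) c w" .
qed

lemma push_support:
  assumes "push h c w \<noteq> 0" shows "\<exists>v. c v \<noteq> 0 \<and> h v = w"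
proof (rule ccontr)
  assume "\<not> ?thesis"
  then have "{v. c v \<noteq> 0 \<and> h v = w} = {}" by auto
  then show False using assms unfolding push_def by (metis (no_types, lifting) sum.empty)
qed

lemma push_fin:
  assumes fin: "finite {v. c v \<noteq> 0}"
  shows "finite {w. push h c w \<noteq> 0}"
proof -
  have "{w. push h c w \<noteq> 0} \<subseteq> h ` {v. c v \<noteq> 0}" using push_support by fast
  then show ?thesis using fin finite_subset by blast
qed

lemma push_free_ab:
  assumes "c \<in> free_ab W" "\<And>v. v \<in> W \<Longrightarrow> h v \<in> W'"
  shows "push h c \<in> free_ab W'"
  unfolding free_ab_def proof safe
  show "finite {w. push h c w \<noteq> 0}" using assms push_fin unfolding free_ab_def by blast
  fix w assume "push h c w \<noteq> 0"
  then obtain v where "c v \<noteq> 0" "h v = w" using push_support by metis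
  then show "w \<in> W'" using assms unfolding free_ab_def by blast
qed

lemma push_cong:
  assumes "\<And>v. c v \<noteq> 0 \<Longrightarrow> h v = k v"
  shows "push h c = push k c"
  unfolding push_def using assms by (intro ext sum.cong) auto



lemma push_glue:
  fixes s :: "'p \<Rightarrow> 'c" and n :: 'c and a :: 'v and A :: "'i set"
  assumes finA: "finite A"
  and sC: "\<And>i p. i\<in>A \<Longrightarrow> p \<in> Z i \<Longrightarrow> s p \<in> C i"
  and sn: "\<And>p. s p \<noteq> n"
  and Cdisj: "\<And>i j. i\<in>A \<Longrightarrow> j\<in>A \<Longrightarrow> i\<noteq>j \<Longrightarrow> C i \<inter> C j \<subseteq> {n}"
  and Tfin: "\<And>i. i\<in>A \<Longrightarrow> finite {g. T i g \<noteq> 0}"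
  and Tsupp: "\<And>i g. i\<in>A \<Longrightarrow> T i g \<noteq> 0 \<Longrightarrow> g \<in> extensional (C i) \<and> (n \<in> C i \<longrightarrow> g n = a)"
  shows "push (\<lambda>g. restrict (\<lambda>p. g (s p)) (\<Union>i\<in>A. Z i)) (glue ({n} \<union> (\<Union>i\<in>A. C i)) (\<lambda>g. g n = a) A C T)
       = glue (\<Union>i\<in>A. Z i) (\<lambda>_. True) A Z (\<lambda>i. push (\<lambda>g. restrict (\<lambda>p. g (s p)) (Z i)) (T i))"
proof
  fix w :: "'p \<Rightarrow> 'v"
  define D where "D = (\<Union>i\<in>A. Z i)"
  define W where "W = {n} \<union> (\<Union>i\<in>A. C i)"
  define G0 where "G0 = glue W (\<lambda>g. g n = a) A C T"
  define hA where "hA = (\<lambda>g::'c\<Rightarrow>'v. restrict (\<lambda>p. g (s p)) D)"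
  define G where "G = {g. G0 g \<noteq> 0 \<and> hA g = w}"
  have lhs: "push hA G0 w = sum G0 G" unfolding push_def G_def by simp
  have main: "sum G0 G = glue D (\<lambda>_. True) A Z (\<lambda>i. push (\<lambda>g. restrict (\<lambda>p. g (s p)) (Z i)) (T i)) w"
  proof (cases "w \<in> extensional D")
    case False
    then have "G = {}" unfolding G_def hA_def by auto
    then show ?thesis using False unfolding glue_def by simp
  next
    case wD: True
    define B where "B = (\<lambda>i. {g. T i g \<noteq> 0 \<and> restrict (\<lambda>p. g (s p)) (Z i) = restrict w (Z i)})"
    define f where "f = (\<lambda>\<phi>. \<Prod>i\<in>A. T i (\<phi> i))"
    define Q where "Q = {\<phi> \<in> PiE A B. f \<phi> \<noteq> 0}"
    have finB: "finite (B i)" if "i \<in> A" for i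
      using Tfin[OF that] unfolding B_def by (rule finite_subset[rotated]) auto
    have rhs: "glue D (\<lambda>_. True) A Z (\<lambda>i. push (\<lambda>g. restrict (\<lambda>p. g (s p)) (Z i)) (T i)) w
          = (\<Prod>i\<in>A. \<Sum>g\<in>B i. T i g)"
      using wD unfolding glue_def push_def B_def by simp
    also have "\<dots> = sum f (PiE A B)"
      unfolding f_def by (rule prod_sum_PiE[OF finA finB])
    also have "\<dots> = sum f Q"
      unfolding Q_def by (rule sum.mono_neutral_right) (auto intro: finite_PiE finA finB)
    finally have rhs: "glue D (\<lambda>_. True) A Z (\<lambda>i. push (\<lambda>g. restrict (\<lambda>p. g (s p)) (Z i)) (T i)) w = sum f Q" .
    define \<Phi> where "\<Phi> = (\<lambda>g::'c\<Rightarrow>'v. restrict (\<lambda>i. restrict g (C i)) A)"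
    define \<Psi> where "\<Psi> = (\<lambda>\<phi>::'i\<Rightarrow>'c\<Rightarrow>'v. \<lambda>z. if z = n then a else if (\<exists>i\<in>A. z \<in> C i)
                         then \<phi> (SOME i. i\<in>A \<and> z \<in> C i) z else undefined)"
    have G0eq: "G0 g = f (\<Phi> g)" if "g \<in> G" for g
    proof -
      have "G0 g \<noteq> 0" using that G_def by auto
      then have "g \<in> extensional W \<and> g n = a" unfolding G0_def glue_def by (auto split: if_splits)
      then show ?thesis unfolding G0_def glue_def f_def \<Phi>_def by simp
    qed
    have bij: "bij_betw \<Phi> G Q"
    proof (rule bij_betw_byWitness[where f'=\<Psi>])
      show "\<forall>g\<in>G. \<Psi> (\<Phi> g) = g"
      proof
        fix g assume g: "g \<in> G"
        then have "G0 g \<noteq> 0" using G_def by auto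
        then have gW: "g \<in> extensional W" and gn: "g n = a" unfolding G0_def glue_def by (auto split: if_splits)
        show "\<Psi> (\<Phi> g) = g"
        proof
          fix z
          show "\<Psi> (\<Phi> g) z = g z"
          proof (cases "z = n")
            case True then show ?thesis using gn unfolding \<Psi>_def by simp
          next
            case zn: False
            show ?thesis
            proof (cases "\<exists>i\<in>A. z \<in> C i")
              case True
              then have "(SOME i. i\<in>A \<and> z \<in> C i) \<in> A \<and> z \<in> C (SOME i. i\<in>A \<and> z \<in> C i)"
                by (metis (mono_tags, lifting) someI_ex)
              then show ?thesis using zn True unfolding \<Psi>_def \<Phi>_def by simp
            next
              case False
              then have "z \<notin> W" using zn unfolding W_def by auto
              then show ?thesis using gW zn False unfolding \<Psi>_def extensional_def by auto
            qed
          qed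
        qed
      qed
      show "\<Phi> ` G \<subseteq> Q"
      proof
        fix \<phi> assume "\<phi> \<in> \<Phi> ` G"
        then obtain g where g: "g \<in> G" and ph: "\<phi> = \<Phi> g" by auto
        then have G0g: "G0 g \<noteq> 0" and hg: "hA g = w" using G_def by auto
        have fne: "f \<phi> \<noteq> 0" using G0eq[OF g] G0g ph by simp
        have "\<phi> \<in> PiE A B"
        proof (rule PiE_I)
          fix i assume i: "i \<in> A"
          have "T i (\<phi> i) \<noteq> 0" using fne i finA unfolding f_def by (auto simp: prod_zero_iff)
          moreover have "restrict (\<lambda>p. \<phi> i (s p)) (Z i) = restrict w (Z i)"
          proof
            fix p show "restrict (\<lambda>p. \<phi> i (s p)) (Z i) p = restrict w (Z i) p"
            proof (cases "p \<in> Z i")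
              case True
              then have "p \<in> D" using i D_def by auto
              then have "w p = g (s p)" using hg unfolding hA_def by auto
              then show ?thesis using True sC[OF i True] i unfolding ph \<Phi>_def by simp
            qed simp
          qed
          ultimately show "\<phi> i \<in> B i" unfolding B_def by simp
        next
          fix i assume "i \<notin> A" then show "\<phi> i = undefined" unfolding ph \<Phi>_def by simp
        qed
        then show "\<phi> \<in> Q" using fne Q_def by simp
      qed
      have key: "restrict (\<Psi> \<phi>) (C i) = \<phi> i \<and> T i (\<phi> i) \<noteq> 0" if \<phi>: "\<phi> \<in> Q" and i: "i \<in> A" for \<phi> i
      proof -
        have fne: "f \<phi> \<noteq> 0" and pB: "\<phi> \<in> PiE A B" using \<phi> Q_def by auto
        have Tne: "T i (\<phi> i) \<noteq> 0" using fne i finA unfolding f_def by (auto simp: prod_zero_iff)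
        have ext: "\<phi> i \<in> extensional (C i)" and pn: "n \<in> C i \<longrightarrow> \<phi> i n = a" using Tsupp[OF i Tne] by auto
        have "restrict (\<Psi> \<phi>) (C i) = \<phi> i"
        proof
          fix z show "restrict (\<Psi> \<phi>) (C i) z = \<phi> i z"
          proof (cases "z \<in> C i")
            case zC: True
            show ?thesis
            proof (cases "z = n")
              case True then show ?thesis using zC pn unfolding \<Psi>_def by simp
            next
              case zn: False
              have ex: "\<exists>j\<in>A. z \<in> C j" using i zC by auto
              then have "(SOME i. i\<in>A \<and> z \<in> C i) \<in> A \<and> z \<in> C (SOME i. i\<in>A \<and> z \<in> C i)"
                by (metis (mono_tags, lifting) someI_ex)
              then have "(SOME i. i\<in>A \<and> z \<in> C i) = i" using Cdisj[OF _ i] zC zn by blast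
              then show ?thesis using zC zn ex unfolding \<Psi>_def by simp
            qed
          next
            case False then show ?thesis using ext unfolding extensional_def by simp
          qed
        qed
        then show ?thesis using Tne by simp
      qed
      show "\<forall>\<phi>\<in>Q. \<Phi> (\<Psi> \<phi>) = \<phi>"
      proof
        fix \<phi> assume \<phi>: "\<phi> \<in> Q"
        then have pB: "\<phi> \<in> PiE A B" using Q_def by auto
        show "\<Phi> (\<Psi> \<phi>) = \<phi>"
        proof
          fix i show "\<Phi> (\<Psi> \<phi>) i = \<phi> i"
            using key[OF \<phi>] pB unfolding \<Phi>_def by (cases "i \<in> A") (auto simp: PiE_def extensional_def)
        qed
      qed
      show "\<Psi> ` Q \<subseteq> G"
      proof
        fix g assume "g \<in> \<Psi> ` Q"
        then obtain \<phi> where \<phi>: "\<phi> \<in> Q" and g: "g = \<Psi> \<phi>" by auto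
        have fne: "f \<phi> \<noteq> 0" and pB: "\<phi> \<in> PiE A B" using \<phi> Q_def by auto
        have gW: "g \<in> extensional W" unfolding g \<Psi>_def W_def extensional_def by auto
        have gn: "g n = a" unfolding g \<Psi>_def by simp
        have "G0 g = (\<Prod>i\<in>A. T i (restrict g (C i)))" unfolding G0_def glue_def using gW gn by simp
        also have "\<dots> = f \<phi>" unfolding f_def g using key[OF \<phi>] by (intro prod.cong) auto
        finally have G0g: "G0 g \<noteq> 0" using fne by simp
        have "hA g = w"
        proof
          fix p show "hA g p = w p"
          proof (cases "p \<in> D")
            case True
            then obtain i where i: "i \<in> A" and pZ: "p \<in> Z i" unfolding D_def by auto
            have "\<phi> i \<in> B i" using pB i by auto
            then have "restrict (\<lambda>p. \<phi> i (s p)) (Z i) p = restrict w (Z i) p" unfolding B_def by simp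
            then have "\<phi> i (s p) = w p" using pZ by simp
            moreover have "g (s p) = \<phi> i (s p)"
              using key[OF \<phi> i] sC[OF i pZ] unfolding g by (metis restrict_apply')
            ultimately show ?thesis using True unfolding hA_def by simp
          next
            case False then show ?thesis using wD unfolding hA_def extensional_def by simp
          qed
        qed
        then show "g \<in> G" using G0g G_def by simp
      qed
    qed
    have "sum G0 G = sum (\<lambda>g. f (\<Phi> g)) G" using G0eq by (rule sum.cong[OF refl])
    also have "\<dots> = sum f Q" by (rule sum.reindex_bij_betw[OF bij])
    finally show ?thesis using rhs by simp
  qed
  show "push (\<lambda>g. restrict (\<lambda>p. g (s p)) (\<Union>i\<in>A. Z i)) (glue ({n} \<union> (\<Union>i\<in>A. C i)) (\<lambda>g. g n = a) A C T) w
       = glue (\<Union>i\<in>A. Z i) (\<lambda>_. True) A Z (\<lambda>i. push (\<lambda>g. restrict (\<lambda>p. g (s p)) (Z i)) (T i)) w"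
    using main lhs unfolding D_def W_def G0_def hA_def by simp
qed

lemma quot_istop: "istopology (\<lambda>U. U \<subseteq> q ` topspace T \<and> openin T {x \<in> topspace T. q x \<in> U})"
  unfolding istopology_def
proof (rule conjI; intro allI impI)
  fix S U assume S: "S \<subseteq> q ` topspace T \<and> openin T {x \<in> topspace T. q x \<in> S}"
    and U: "U \<subseteq> q ` topspace T \<and> openin T {x \<in> topspace T. q x \<in> U}"
  then have "openin T ({x \<in> topspace T. q x \<in> S} \<inter> {x \<in> topspace T. q x \<in> U})" by blast
  moreover have "{x \<in> topspace T. q x \<in> S} \<inter> {x \<in> topspace T. q x \<in> U} = {x \<in> topspace T. q x \<in> S \<inter> U}" by auto
  ultimately show "S \<inter> U \<subseteq> q ` topspace T \<and> openin T {x \<in> topspace T. q x \<in> S \<inter> U}" using S U by auto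
next
  fix K assume K: "\<forall>k\<in>K. k \<subseteq> q ` topspace T \<and> openin T {x \<in> topspace T. q x \<in> k}"
  have "openin T (\<Union>k\<in>K. {x \<in> topspace T. q x \<in> k})" using K by blast
  moreover have "(\<Union>k\<in>K. {x \<in> topspace T. q x \<in> k}) = {x \<in> topspace T. q x \<in> \<Union>K}" by auto
  ultimately show "\<Union>K \<subseteq> q ` topspace T \<and> openin T {x \<in> topspace T. q x \<in> \<Union>K}" using K by auto
qed

lemma openin_quot: "openin (quot_top T q) U \<longleftrightarrow> U \<subseteq> q ` topspace T \<and> openin T {x \<in> topspace T. q x \<in> U}"
  unfolding quot_top_def topology_inverse'[OF quot_istop] by simp

lemma topspace_quot: "topspace (quot_top T q) = q ` topspace T"
proof -
  have "{x \<in> topspace T. q x \<in> q ` topspace T} = topspace T" by auto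
  then have "openin (quot_top T q) (q ` topspace T)" unfolding openin_quot by simp
  moreover have "\<And>U. openin (quot_top T q) U \<Longrightarrow> U \<subseteq> q ` topspace T" unfolding openin_quot by simp
  ultimately show ?thesis unfolding topspace_def by blast
qed

lemma cont_quot: "continuous_map T (quot_top T q) q"
  unfolding continuous_map_def topspace_quot openin_quot by auto

lemma fsimplex_disj:
  assumes "F \<inter> F' = {}" shows "fsimplex F \<inter> fsimplex F' = {}"
proof (rule ccontr)
  assume "fsimplex F \<inter> fsimplex F' \<noteq> {}"
  then obtain x where x: "x \<in> fsimplex F" "x \<in> fsimplex F'" by blast
  have "\<forall>i\<in>F. x i = 0" using x(2) assms unfolding fsimplex_def by blast
  then have "sum x F = 0" by simp
  then show False using x(1) unfolding fsimplex_def by simp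
qed

lemma fsimplex_mono:
  assumes "finite E" "F \<subseteq> E" shows "fsimplex F \<subseteq> fsimplex E"
proof
  fix x assume x: "x \<in> fsimplex F"
  have "sum x F = sum x E"
    by (rule sum.mono_neutral_left) (use assms x in \<open>auto simp: fsimplex_def\<close>)
  then show "x \<in> fsimplex E" using x assms unfolding fsimplex_def by auto
qed

lemma cone_pt1: "cone_pt (p, 1) = Some (p, 1)"
  unfolding cone_pt_def by simp

lemma Some_in_cone: "p \<in> S \<Longrightarrow> Some (p, 1) \<in> cone_set S"
  unfolding cone_set_def by (metis cone_pt1 atLeastAtMost_iff image_eqI mem_Sigma_iff order_refl zero_le_one)

lemma cone_disj:
  assumes "fsimplex F \<inter> fsimplex F' = {}"
  shows "cone_set (fsimplex F) \<inter> cone_set (fsimplex F') \<subseteq> {None}"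
proof
  fix z assume z: "z \<in> cone_set (fsimplex F) \<inter> cone_set (fsimplex F')"
  show "z \<in> {None}"
  proof (rule ccontr)
    assume zn: "z \<notin> {None}"
    obtain u t where u: "u \<in> fsimplex F" "z = cone_pt (u, t)" using z unfolding cone_set_def by auto
    obtain u' t' where u': "u' \<in> fsimplex F'" "z = cone_pt (u', t')" using z unfolding cone_set_def by auto
    have "z = Some (u, t)" "z = Some (u', t')" using u u' zn unfolding cone_pt_def by (auto split: if_splits)
    then have "u = u'" by simp
    then show False using u u' assms by blast
  qed
qed

lemma glue_cong:
  assumes "\<And>i. i \<in> A \<Longrightarrow> S i = S' i"
  shows "glue D P A Z S = glue D P A Z S'"
  unfolding glue_def using assms by (intro ext) (simp cong: prod.cong)

theorem lemma13p4:
  fixes X :: "'x topology" and Y :: "'y topology" and x0 :: 'x and y0 :: 'y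
    and r :: nat and a b :: "'x \<Rightarrow> 'y"
  assumes "cellular_space X x0" and "cellular_space Y y0" and "compact_space X"
    and "continuous_map X Y a" and "a x0 = y0"
    and "continuous_map X Y b" and "b x0 = y0"
    and "firmly_similar X x0 Y y0 r a b"
  shows "r_approx X x0 Y y0 r a b"
  unfolding r_approx_def
proof (intro allI impI)
  fix E :: "nat set" assume E: "finite E \<and> E \<noteq> {}"
  define a' where "a' = restrict a (topspace X)"
  define M where "M = map_comp X x0 Y y0 a'"
  obtain R where R: "R \<in> free_ab {g. continuous_map (cone_top E) M g
                        \<and> g None = a' \<and> g \<in> extensional (cone_set (fsimplex E))}"
     and Rf: "cone_fissile E a' R"
     and Rfilt: "(\<lambda>f. gen (restrict (\<lambda>_. restrict b (topspace X)) (fsimplex E)) f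
           - push (\<lambda>g. restrict (\<lambda>p. g (Some (p, 1))) (fsimplex E)) R f)
           \<in> filt_X E X x0 Y y0 (r + 1)"
    using assms(8) E unfolding firmly_similar_def a'_def[symmetric] M_def[symmetric] by blast
  have Rfin: "finite {g. R g \<noteq> 0}" using R unfolding free_ab_def by simp
  have Rsupp: "R g \<noteq> 0 \<Longrightarrow> continuous_map (cone_top E) M g \<and> g None = a'" for g
    using R unfolding free_ab_def by blast
  define h where "h = (\<lambda>g::((nat \<Rightarrow> real) \<times> real) option \<Rightarrow> ('x \<Rightarrow> 'y). restrict (\<lambda>p. g (Some (p, 1))) (fsimplex E))"
  define S where "S = push h R"
  have Sfree: "S \<in> free_ab (unbased_maps (simplex_top E) M)"
  proof -
    have "R \<in> free_ab {g. R g \<noteq> 0}" using Rfin unfolding free_ab_def by simp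
    moreover have "h g \<in> unbased_maps (simplex_top E) M" if "g \<in> {g. R g \<noteq> 0}" for g
    proof -
      have cg: "continuous_map (cone_top E) M g" using Rsupp that by simp
      have top: "topspace (simplex_top E) = fsimplex E" unfolding simplex_top_def by simp
      have c1: "continuous_map (simplex_top E) (prod_topology (simplex_top E) (top_of_set {0..1::real})) (\<lambda>p. (p, 1))"
        unfolding continuous_map_pairwise o_def by auto
      have c2: "continuous_map (simplex_top E) M (g \<circ> cone_pt \<circ> (\<lambda>p. (p, 1)))"
        using continuous_map_compose[OF continuous_map_compose[OF c1 cont_quot] cg[unfolded cone_top_def]] by (simp add: o_assoc)
      have "continuous_map (simplex_top E) M (h g)"
        by (rule continuous_map_eq[OF c2]) (simp add: h_def top cone_pt1)
      moreover have "h g \<in> extensional (topspace (simplex_top E))" unfolding h_def top by simp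
      ultimately show ?thesis unfolding unbased_maps_def by simp
    qed
    ultimately show ?thesis unfolding S_def by (rule push_free_ab)
  qed
  have Sfis: "fissile E S"
    unfolding fissile_def
  proof (intro allI impI)
    fix A assume A: "layout E A"
    have AE: "\<And>F. F \<in> A \<Longrightarrow> F \<subseteq> E" using A unfolding layout_def by blast
    have finA: "finite A" using A E unfolding layout_def by (meson finite_Pow_iff finite_subset)
    define D where "D = (\<Union>F\<in>A. fsimplex F)"
    define C where "C = (\<lambda>F. cone_set (fsimplex F))"
    define T where "T = (\<lambda>F. push (\<lambda>g. restrict g (C F)) R)"
    have DE: "D \<subseteq> fsimplex E" unfolding D_def using fsimplex_mono[OF conjunct1[OF E]] AE by blast
    have "push (\<lambda>f. restrict f D) S = push ((\<lambda>f. restrict f D) \<circ> h) R"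
      unfolding S_def by (rule push_push[OF Rfin])
    also have "(\<lambda>f. restrict f D) \<circ> h = (\<lambda>g. restrict (\<lambda>p. g (Some (p, 1))) D) \<circ> (\<lambda>g. restrict g (wedge_set A))"
    proof (rule ext, rule ext)
      fix g p
      show "((\<lambda>f. restrict f D) \<circ> h) g p = ((\<lambda>g. restrict (\<lambda>p. g (Some (p, 1))) D) \<circ> (\<lambda>g. restrict g (wedge_set A))) g p"
      proof (cases "p \<in> D")
        case True
        then have "Some (p, 1) \<in> wedge_set A" unfolding D_def wedge_set_def using Some_in_cone by blast
        then show ?thesis using True DE unfolding h_def by auto
      next
        case False then show ?thesis by simp
      qed
    qed
    also have "push \<dots> R = push (\<lambda>g. restrict (\<lambda>p. g (Some (p, 1))) D) (push (\<lambda>g. restrict g (wedge_set A)) R)"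
      by (rule push_push[OF Rfin, symmetric])
    also have "\<dots> = push (\<lambda>g. restrict (\<lambda>p. g (Some (p, 1))) D) (glue ({None} \<union> (\<Union>F\<in>A. C F)) (\<lambda>g. g None = a') A C T)"
      using Rf A unfolding cone_fissile_def wedge_set_def C_def T_def by simp
    also have "\<dots> = glue D (\<lambda>_. True) A fsimplex (\<lambda>F. push (\<lambda>g. restrict (\<lambda>p. g (Some (p, 1))) (fsimplex F)) (T F))"
      unfolding D_def
    proof (rule push_glue[OF finA])
      show "\<And>i p. i \<in> A \<Longrightarrow> p \<in> fsimplex i \<Longrightarrow> Some (p, 1) \<in> C i" unfolding C_def by (rule Some_in_cone)
      show "\<And>p. Some (p, 1) \<noteq> None" by simp
      show "\<And>i j. i \<in> A \<Longrightarrow> j \<in> A \<Longrightarrow> i \<noteq> j \<Longrightarrow> C i \<inter> C j \<subseteq> {None}"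
        unfolding C_def using A unfolding layout_def pairwise_def disjnt_def by (metis cone_disj fsimplex_disj)
      show "\<And>i. i \<in> A \<Longrightarrow> finite {g. T i g \<noteq> 0}" unfolding T_def by (rule push_fin[OF Rfin])
      fix i g assume i: "i \<in> A" and Tg: "T i g \<noteq> 0"
      then obtain v where v: "R v \<noteq> 0" "restrict v (C i) = g" using push_support unfolding T_def by metis
      then show "g \<in> extensional (C i) \<and> (None \<in> C i \<longrightarrow> g None = a')" using Rsupp[OF v(1)] by auto
    qed
    also have "\<dots> = glue D (\<lambda>_. True) A fsimplex (\<lambda>F. push (\<lambda>f. restrict f (fsimplex F)) S)"
    proof (rule glue_cong)
      fix F assume F: "F \<in> A"
      have sub: "fsimplex F \<subseteq> fsimplex E" using fsimplex_mono[OF conjunct1[OF E] AE[OF F]] .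
      have "push (\<lambda>f. restrict f (fsimplex F)) S = push ((\<lambda>f. restrict f (fsimplex F)) \<circ> h) R"
        unfolding S_def by (rule push_push[OF Rfin])
      also have "(\<lambda>f. restrict f (fsimplex F)) \<circ> h = (\<lambda>g. restrict (\<lambda>p. g (Some (p, 1))) (fsimplex F)) \<circ> (\<lambda>g. restrict g (C F))"
      proof (rule ext, rule ext)
        fix g p
        show "((\<lambda>f. restrict f (fsimplex F)) \<circ> h) g p = ((\<lambda>g. restrict (\<lambda>p. g (Some (p, 1))) (fsimplex F)) \<circ> (\<lambda>g. restrict g (C F))) g p"
        proof (cases "p \<in> fsimplex F")
          case True
          then have "Some (p, 1) \<in> C F" unfolding C_def using Some_in_cone by blast
          then show ?thesis using True sub unfolding h_def by auto
        next
          case False then show ?thesis by simp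
        qed
      qed
      also have "push \<dots> R = push (\<lambda>g. restrict (\<lambda>p. g (Some (p, 1))) (fsimplex F)) (T F)"
        unfolding T_def by (rule push_push[OF Rfin, symmetric])
      finally show "push (\<lambda>g. restrict (\<lambda>p. g (Some (p, 1))) (fsimplex F)) (T F) = push (\<lambda>f. restrict f (fsimplex F)) S" by (rule sym)
    qed
    finally show "push (\<lambda>f. restrict f (\<Union>F\<in>A. fsimplex F)) S =
      glue (\<Union>F\<in>A. fsimplex F) (\<lambda>_. True) A fsimplex (\<lambda>F. push (\<lambda>f. restrict f (fsimplex F)) S)"
      unfolding D_def .
  qed
  show "\<exists>S \<in> free_ab (unbased_maps (simplex_top E) (map_comp X x0 Y y0 (restrict a (topspace X)))).
         fissile E S \<and>
         (\<lambda>f. gen (restrict (\<lambda>_. restrict b (topspace X)) (fsimplex E)) f - S f) \<in> filt_X E X x0 Y y0 (r + 1)"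
    using Sfree Sfis Rfilt unfolding M_def a'_def S_def h_def by blast
qed
end
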